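(* Let $\lambda>0$, $c>0$, $0<p<1$, and let $\big(X(t),Y(t)\big)$ be the planar orthogonal random motion described in the context. Then for all $t>0$, $$\mathbb{P}\big(X(t)+Y(t)=ct\big)=\frac{1}{2}\,e^{-\lambda t(1-p)}.$$
   Context: Directions: $d_j=\big(\cos(\pi j/2),\sin(\pi j/2)\big)$, $j=0,1,2,3$, indices mod 4. Let $N(t)$ be a homogeneous Poisson process of rate $\lambda$. The direction process $D(t)$ has $D(0)$ uniform on the four directions and changes only at Poisson event times: from a horizontal direction ($d_0,d_2$) it turns counterclockwise ($d_j\to d_{j+1}$) with probability $p$ and clockwise ($d_j\to d_{j-1}$) with probability $1-p$; from a vertical direction ($d_1,d_3$) it turns counterclockwise with probability $1-p$ and clockwise with probability $p$ (independent choices). The position is $\big(X(t),Y(t)\big)=c\int_0^t D(\tau)\,d\tau$ starting from the origin. *)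

theory Defs
  imports "HOL-Probability.Probability"
begin

definition dirvec :: "nat \<Rightarrow> real \<times> real" where
  "dirvec j = (cos (pi * real (j mod 4) / 2), sin (pi * real (j mod 4) / 2))"

definition event_time :: "(nat \<Rightarrow> real) \<Rightarrow> nat \<Rightarrow> real" where
  "event_time \<tau> n = (\<Sum>k<n. \<tau> k)"

definition count_proc :: "(nat \<Rightarrow> real) \<Rightarrow> real \<Rightarrow> nat" where
  "count_proc \<tau> t = card {n. 1 \<le> n \<and> event_time \<tau> n \<le> t}"

text \<open>Coin b k = True has probability p:
  from a horizontal direction (even index) it means a counterclockwise turn,
  from a vertical direction (odd index) it means a clockwise turn.\<close>
fun dir_index :: "nat \<Rightarrow> (nat \<Rightarrow> bool) \<Rightarrow> nat \<Rightarrow> nat" where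
  "dir_index j0 b 0 = j0 mod 4"
| "dir_index j0 b (Suc k) =
     (let j = dir_index j0 b k in
      if even j then (if b k then (j + 1) mod 4 else (j + 3) mod 4)
      else (if b k then (j + 3) mod 4 else (j + 1) mod 4))"

definition dir_proc :: "nat \<Rightarrow> (nat \<Rightarrow> real) \<Rightarrow> (nat \<Rightarrow> bool) \<Rightarrow> real \<Rightarrow> real \<times> real" where
  "dir_proc j0 \<tau> b t = dirvec (dir_index j0 b (count_proc \<tau> t))"

definition position :: "real \<Rightarrow> nat \<Rightarrow> (nat \<Rightarrow> real) \<Rightarrow> (nat \<Rightarrow> bool) \<Rightarrow> real \<Rightarrow> real \<times> real" where
  "position c j0 \<tau> b t = c *\<^sub>R integral {0..t} (\<lambda>s. dir_proc j0 \<tau> b s)"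

definition input_law :: "real \<Rightarrow> real \<Rightarrow> (nat \<times> (nat \<Rightarrow> real \<times> bool)) measure" where
  "input_law lam p =
     measure_pmf (pmf_of_set {0..<4}) \<Otimes>\<^sub>M
     (\<Pi>\<^sub>M k\<in>UNIV. density lborel (exponential_density lam) \<Otimes>\<^sub>M measure_pmf (bernoulli_pmf p))"

definition input_space :: "(nat \<times> (nat \<Rightarrow> real \<times> bool)) measure" where
  "input_space = count_space UNIV \<Otimes>\<^sub>M (\<Pi>\<^sub>M k\<in>UNIV. borel \<Otimes>\<^sub>M count_space UNIV)"

end

theory Submission
  imports Defs
begin


definition Mk :: "real \<Rightarrow> real \<Rightarrow> (real \<times> bool) measure" where
 "Mk lam p = density lborel (exponential_density lam) \<Otimes>\<^sub>M measure_pmf (bernoulli_pmf p)"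

definition ssum :: "(nat \<Rightarrow> real \<times> bool) \<Rightarrow> nat \<Rightarrow> real" where
 "ssum w n = (\<Sum>k<n. fst (w k))"

lemma ssum_0[simp]: "ssum w 0 = 0" by (simp add: ssum_def)
lemma ssum_Suc0[simp]: "ssum w (Suc 0) = fst (w 0)" by (simp add: ssum_def)
lemma ssum_case_nat_Suc: "ssum (case_nat y w) (Suc n) = fst y + ssum w n"
  unfolding ssum_def by (subst sum.lessThan_Suc_shift) simp

lemma input_law_eq: "input_law lam p = measure_pmf (pmf_of_set {0..<4}) \<Otimes>\<^sub>M (\<Pi>\<^sub>M k\<in>UNIV. Mk lam p)"
  unfolding input_law_def Mk_def by simp

definition pois :: "real \<Rightarrow> nat \<Rightarrow> real \<Rightarrow> real" where
  "pois lam n t = (if 0 \<le> t then exp (- lam * t) * (lam * t) ^ n / fact n else 0)"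

lemma pois_nonneg: "lam \<ge> 0 \<Longrightarrow> 0 \<le> pois lam n t"
  by (simp add: pois_def)

lemma ftc_poly:
  fixes C t :: real assumes t: "0 \<le> t"
  shows "((\<lambda>x. C * (t - x) ^ n) has_integral (C * t ^ Suc n / real (Suc n))) {0..t}"
proof -
  let ?G = "\<lambda>x::real. - (C / real (Suc n)) * (t - x) ^ Suc n"
  have "((\<lambda>x. C * (t - x) ^ n) has_integral (?G t - ?G 0)) {0..t}"
  proof (rule fundamental_theorem_of_calculus[OF t])
    fix x :: real assume "x \<in> {0..t}"
    have "(?G has_real_derivative C * (t - x) ^ n) (at x within {0..t})"
      by (auto intro!: derivative_eq_intros simp del: power_Suc of_nat_Suc)
    then show "(?G has_vector_derivative C * (t - x) ^ n) (at x within {0..t})"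
      by (simp add: has_real_derivative_iff_has_vector_derivative)
  qed
  then show ?thesis by simp
qed

lemma conv_step:
  assumes lam: "lam > 0" and r: "r \<ge> 0"
  shows "((\<lambda>x. exponential_density lam x * (r * pois lam n (t - x))) has_integral (r * pois lam (Suc n) t)) UNIV"
proof (cases "0 \<le> t")
  case False
  then have "(\<lambda>x. exponential_density lam x * (r * pois lam n (t - x))) = (\<lambda>x. 0)"
    by (auto simp: fun_eq_iff pois_def exponential_density_def)
  then show ?thesis using False by (simp add: pois_def)
next
  case t: True
  define C where "C = r * lam ^ Suc n * exp (- lam * t) / fact n"
  have eq: "(\<lambda>x. exponential_density lam x * (r * pois lam n (t - x))) =
        (\<lambda>x. if x \<in> {0..t} then C * (t - x) ^ n else 0)"
  proof
    fix x :: real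
    show "exponential_density lam x * (r * pois lam n (t - x)) = (if x \<in> {0..t} then C * (t - x) ^ n else 0)"
    proof (cases "x \<in> {0..t}")
      case True
      have e: "exp (- x * lam) * exp (- lam * (t - x)) = exp (- lam * t)"
        by (simp add: exp_add[symmetric] algebra_simps)
      have "exponential_density lam x * (r * pois lam n (t - x)) =
            r * lam * lam ^ n * (exp (- x * lam) * exp (- lam * (t - x))) * (t - x) ^ n / fact n"
        using True by (simp add: exponential_density_def pois_def power_mult_distrib)
      also have "\<dots> = C * (t - x) ^ n" unfolding e C_def by simp
      finally show ?thesis using True by simp
    next
      case False
      then show ?thesis by (auto simp: exponential_density_def pois_def)
    qed
  qed
  have "((\<lambda>x. if x \<in> {0..t} then C * (t - x) ^ n else 0) has_integral (C * t ^ Suc n / real (Suc n))) UNIV"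
    by (subst has_integral_restrict_UNIV) (rule ftc_poly[OF t])
  moreover have "C * t ^ Suc n / real (Suc n) = r * pois lam (Suc n) t"
    using t by (simp add: C_def pois_def power_mult_distrib field_simps)
  ultimately show ?thesis using eq by simp
qed


definition W :: "(bool \<Rightarrow> bool) \<Rightarrow> nat \<Rightarrow> real \<Rightarrow> (nat \<Rightarrow> real \<times> bool) set" where
  "W P n t = {w. ssum w n \<le> t \<and> t < ssum w (Suc n) \<and> (\<forall>k<n. P (snd (w k)))}"

definition rr :: "(bool \<Rightarrow> bool) \<Rightarrow> real \<Rightarrow> real" where
  "rr P p = (if P True then p else 0) + (if P False then 1 - p else 0)"

locale motion_ctx = fixes lam p :: real assumes lam: "lam > 0" and p0: "0 \<le> p" and p1: "p \<le> 1"
begin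

abbreviation "E \<equiv> density lborel (exponential_density lam)"

lemma prob_E: "prob_space E" using prob_space_exponential_density[OF lam] .

lemma prob_Mk: "prob_space (Mk lam p)"
  unfolding Mk_def
  by (intro prob_space_pair prob_E prob_space_measure_pmf)

lemma sets_Mk[simp]: "sets (Mk lam p) = sets (borel \<Otimes>\<^sub>M count_space UNIV)"
  unfolding Mk_def by (intro sets_pair_measure_cong) auto

sublocale sq: sequence_space "Mk lam p"
  by (simp add: sequence_space_def product_prob_space_def product_prob_space_axioms_def
      product_sigma_finite_def prob_Mk prob_space_imp_sigma_finite)

lemma meas_fst_Mk[measurable]: "fst \<in> borel_measurable (Mk lam p)"
  by (simp add: measurable_cong_sets[OF sets_Mk refl])
lemma meas_snd_Mk[measurable]: "snd \<in> measurable (Mk lam p) (count_space UNIV)"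
  by (simp add: measurable_cong_sets[OF sets_Mk refl])
lemma meas_fst_comp[measurable]: "(\<lambda>w. fst (w k)) \<in> borel_measurable sq.S"
  by (rule measurable_compose[OF measurable_component_singleton[of k UNIV "\<lambda>_. Mk lam p"] meas_fst_Mk]) simp
lemma meas_snd_comp[measurable]: "(\<lambda>w. snd (w k)) \<in> measurable sq.S (count_space UNIV)"
  by (rule measurable_compose[OF measurable_component_singleton[of k UNIV "\<lambda>_. Mk lam p"] meas_snd_Mk]) simp


lemma meas_ssum[measurable]: "(\<lambda>w. ssum w n) \<in> borel_measurable sq.S"
  unfolding ssum_def by measurable

lemma E_singleton: "emeasure E {u} = 0"
proof -
  have "AE x in lborel. ennreal (exponential_density lam x) * indicator {u} x = 0"
    using AE_lborel_singleton[of u] by eventually_elim auto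
  then show ?thesis
    by (subst emeasure_density) (auto simp: nn_integral_0_iff_AE)
qed

lemma iter:
  assumes A: "A \<in> sets sq.S"
  shows "emeasure sq.S A = (\<integral>\<^sup>+ y. emeasure sq.S {w \<in> space sq.S. case_nat y w \<in> A} \<partial>Mk lam p)"
proof -
  have m: "(\<lambda>(s, \<omega>). case_nat s \<omega>) \<in> measurable (Mk lam p \<Otimes>\<^sub>M sq.S) sq.S"
    by (auto simp: split_beta')
  have "emeasure sq.S A = emeasure (distr (Mk lam p \<Otimes>\<^sub>M sq.S) sq.S (\<lambda>(s, \<omega>). case_nat s \<omega>)) A"
    by (simp add: sq.PiM_iter)
  also have "\<dots> = emeasure (Mk lam p \<Otimes>\<^sub>M sq.S) ((\<lambda>(s, \<omega>). case_nat s \<omega>) -` A \<inter> space (Mk lam p \<Otimes>\<^sub>M sq.S))"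
    by (rule emeasure_distr[OF m A])
  also have "\<dots> = (\<integral>\<^sup>+ y. emeasure sq.S (Pair y -` ((\<lambda>(s, \<omega>). case_nat s \<omega>) -` A \<inter> space (Mk lam p \<Otimes>\<^sub>M sq.S))) \<partial>Mk lam p)"
    by (rule sq.P.emeasure_pair_measure_alt) (rule measurable_sets[OF m A])
  also have "\<dots> = (\<integral>\<^sup>+ y. emeasure sq.S {w \<in> space sq.S. case_nat y w \<in> A} \<partial>Mk lam p)"
    by (intro nn_integral_cong arg_cong2[where f=emeasure] refl) (auto simp: space_pair_measure)
  finally show ?thesis .
qed

lemma case_nat_space: "y \<in> space (Mk lam p) \<Longrightarrow> w \<in> space sq.S \<Longrightarrow> case_nat y w \<in> space sq.S"
  by (auto simp: space_PiM PiE_iff split: nat.split)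

lemma null_ssum: "emeasure sq.S {w \<in> space sq.S. ssum w (Suc n) = u} = 0"
proof (induction n arbitrary: u)
  case 0
  have "emeasure sq.S {w \<in> space sq.S. ssum w (Suc 0) = u} = (\<integral>\<^sup>+ y. indicator ({u} \<times> UNIV) y \<partial>Mk lam p)"
  proof (subst iter, simp, intro nn_integral_cong)
    fix y assume y: "y \<in> space (Mk lam p)"
    show "emeasure sq.S {w \<in> space sq.S. case_nat y w \<in> {w \<in> space sq.S. ssum w (Suc 0) = u}} = indicator ({u} \<times> UNIV) y"
    proof (cases "fst y = u")
      case True
      then have "{w \<in> space sq.S. case_nat y w \<in> {w \<in> space sq.S. ssum w (Suc 0) = u}} = space sq.S"
        using case_nat_space[OF y] by auto
      then show ?thesis using True by (cases y) (simp add: sq.P.emeasure_space_1)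
    next
      case False
      then show ?thesis by (cases y) simp
    qed
  qed
  also have "\<dots> = emeasure (Mk lam p) ({u} \<times> UNIV)"
    by (rule nn_integral_indicator) (simp add: sets_Mk)
  also have "\<dots> = 0"
    unfolding Mk_def
    by (subst prob_space_imp_sigma_finite[OF prob_space_measure_pmf, THEN sigma_finite_measure.emeasure_pair_measure_Times])
       (auto simp: E_singleton)
  finally show ?case .
next
  case (Suc n)
  have "emeasure sq.S {w \<in> space sq.S. ssum w (Suc (Suc n)) = u}
     = (\<integral>\<^sup>+ y. emeasure sq.S {w \<in> space sq.S. ssum w (Suc n) = u - fst y} \<partial>Mk lam p)"
    by (subst iter) (auto intro!: nn_integral_cong arg_cong2[where f=emeasure] case_nat_space simp: ssum_case_nat_Suc)
  also have "\<dots> = 0" by (simp add: Suc.IH)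
  finally show ?case .
qed

lemma rr_nonneg: "0 \<le> rr P p" using p0 p1 by (simp add: rr_def)

lemma W_sets[measurable]: "W P n t \<inter> space sq.S \<in> sets sq.S"
proof -
  have "W P n t \<inter> space sq.S = {w \<in> space sq.S. ssum w n \<le> t \<and> t < ssum w (Suc n) \<and> (\<forall>k<n. P (snd (w k)))}"
    by (auto simp: W_def)
  also have "\<dots> \<in> sets sq.S" by measurable
  finally show ?thesis .
qed

lemma int_Mk:
  assumes g: "g \<in> borel_measurable borel" "\<And>x. 0 \<le> g x"
  shows "(\<integral>\<^sup>+ y. ennreal (g (fst y)) * indicator {y. P (snd y)} y \<partial>Mk lam p)
     = (\<integral>\<^sup>+ x. ennreal (exponential_density lam x * (rr P p * g x)) \<partial>lborel)"
proof -
  have "(\<integral>\<^sup>+ y. ennreal (g (fst y)) * indicator {y. P (snd y)} y \<partial>Mk lam p)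
     = (\<integral>\<^sup>+ x. \<integral>\<^sup>+ b. ennreal (g (fst (x, b))) * indicator {y. P (snd y)} (x, b) \<partial>bernoulli_pmf p \<partial>E)"
    unfolding Mk_def using g by (subst measure_pmf.nn_integral_fst) auto
  also have "\<dots> = (\<integral>\<^sup>+ x. ennreal (rr P p * g x) \<partial>E)"
  proof (intro nn_integral_cong)
    fix x
    have gx: "0 \<le> g x" by (rule g(2))
    have a: "0 \<le> p * g x" "0 \<le> (1 - p) * g x" using p0 p1 gx by auto
    have "ennreal (p * g x) + ennreal ((1 - p) * g x) = ennreal (g x)"
      using a by (subst ennreal_plus[symmetric]) (auto simp: algebra_simps)
    then show "(\<integral>\<^sup>+ b. ennreal (g (fst (x, b))) * indicator {y. P (snd y)} (x, b) \<partial>bernoulli_pmf p) = ennreal (rr P p * g x)"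
      using p0 p1 gx a by (auto simp: rr_def ennreal_mult'[symmetric] mult.commute)
  qed
  also have "\<dots> = (\<integral>\<^sup>+ x. ennreal (exponential_density lam x) * ennreal (rr P p * g x) \<partial>lborel)"
    using g by (subst nn_integral_density) auto
  also have "\<dots> = (\<integral>\<^sup>+ x. ennreal (exponential_density lam x * (rr P p * g x)) \<partial>lborel)"
    using lam g(2) rr_nonneg by (intro nn_integral_cong) (simp add: ennreal_mult'[symmetric])
  finally show ?thesis .
qed

lemma E_gt: "0 \<le> t \<Longrightarrow> emeasure E {t<..} = ennreal (exp (- lam * t))"
proof -
  assume t: "0 \<le> t"
  interpret E: prob_space E by (rule prob_E)
  have "{t<..} = space E - {..t}" by auto
  moreover have "emeasure E (space E - {..t}) = emeasure E (space E) - emeasure E {..t}"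
    by (rule emeasure_compl) (auto simp: E.emeasure_finite)
  ultimately have "emeasure E {t<..} = emeasure E (space E) - emeasure E {..t}"
    by simp
  also have "\<dots> = 1 - ennreal (1 - exp (- lam * t))"
    using t E.emeasure_space_1 by (simp add: emeasure_erlang_density[OF lam] erlang_CDF_0)
  also have "\<dots> = ennreal (exp (- lam * t))"
    using t lam by (subst ennreal_1[symmetric], subst ennreal_minus) (auto simp: mult_nonneg_nonneg)
  finally show ?thesis .
qed

lemma q_base: "emeasure sq.S (W P 0 t \<inter> space sq.S) = ennreal (pois lam 0 t)"
proof -
  have "emeasure sq.S (W P 0 t \<inter> space sq.S) = (\<integral>\<^sup>+ y. indicator ({x. 0 \<le> t \<and> t < x} \<times> UNIV) y \<partial>Mk lam p)"
  proof (subst iter, simp, intro nn_integral_cong)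
    fix y assume y: "y \<in> space (Mk lam p)"
    show "emeasure sq.S {w \<in> space sq.S. case_nat y w \<in> W P 0 t \<inter> space sq.S} = indicator ({x. 0 \<le> t \<and> t < x} \<times> UNIV) y"
    proof (cases "0 \<le> t \<and> t < fst y")
      case True
      then have "{w \<in> space sq.S. case_nat y w \<in> W P 0 t \<inter> space sq.S} = space sq.S"
        using case_nat_space[OF y] by (auto simp: W_def)
      then show ?thesis using True by (cases y) (simp add: sq.P.emeasure_space_1)
    next
      case False
      then show ?thesis by (cases y) (auto simp: W_def)
    qed
  qed
  also have "\<dots> = emeasure (Mk lam p) ({x. 0 \<le> t \<and> t < x} \<times> UNIV)"
    by (rule nn_integral_indicator) (simp add: sets_Mk)
  also have "\<dots> = emeasure E {x. 0 \<le> t \<and> t < x} * emeasure (measure_pmf (bernoulli_pmf p)) UNIV"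
    unfolding Mk_def
    by (rule measure_pmf.emeasure_pair_measure_Times) auto
  also have "\<dots> = ennreal (pois lam 0 t)"
  proof (cases "0 \<le> t")
    case True
    then have "{x. 0 \<le> t \<and> t < x} = {t<..}" by auto
    then show ?thesis using True E_gt by (simp add: pois_def)
  next
    case False
    then show ?thesis by (simp add: pois_def)
  qed
  finally show ?thesis .
qed

lemma q_formula: "emeasure sq.S (W P n t \<inter> space sq.S) = ennreal (rr P p ^ n * pois lam n t)"
proof (induction n arbitrary: t)
  case 0
  then show ?case using q_base by simp
next
  case (Suc n)
  have "emeasure sq.S (W P (Suc n) t \<inter> space sq.S) =
     (\<integral>\<^sup>+ y. ennreal (rr P p ^ n * pois lam n (t - fst y)) * indicator {y. P (snd y)} y \<partial>Mk lam p)"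
  proof (subst iter, simp, intro nn_integral_cong)
    fix y assume y: "y \<in> space (Mk lam p)"
    have "{w \<in> space sq.S. case_nat y w \<in> W P (Suc n) t \<inter> space sq.S} =
       (if P (snd y) then W P n (t - fst y) \<inter> space sq.S else {})"
      using case_nat_space[OF y]
      by (auto simp: W_def ssum_case_nat_Suc less_Suc_eq_0_disj algebra_simps)
    then show "emeasure sq.S {w \<in> space sq.S. case_nat y w \<in> W P (Suc n) t \<inter> space sq.S} =
      ennreal (rr P p ^ n * pois lam n (t - fst y)) * indicator {y. P (snd y)} y"
      by (simp add: Suc.IH)
  qed
  also have "\<dots> = (\<integral>\<^sup>+ x. ennreal (exponential_density lam x * (rr P p * (rr P p ^ n * pois lam n (t - x)))) \<partial>lborel)"
    by (rule int_Mk[where g="\<lambda>x. rr P p ^ n * pois lam n (t - x)"])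
       (auto simp: pois_def rr_nonneg lam less_imp_le)
  also have "\<dots> = ennreal (rr P p ^ Suc n * pois lam (Suc n) t)"
  proof (rule nn_integral_has_integral_lborel)
    show "(\<lambda>x. exponential_density lam x * (rr P p * (rr P p ^ n * pois lam n (t - x)))) \<in> borel_measurable borel"
      by (simp add: pois_def)
    show "0 \<le> exponential_density lam x * (rr P p * (rr P p ^ n * pois lam n (t - x)))" for x
      using lam rr_nonneg by (intro mult_nonneg_nonneg pois_nonneg exponential_density_nonneg) auto
    show "((\<lambda>x. exponential_density lam x * (rr P p * (rr P p ^ n * pois lam n (t - x)))) has_integral
        rr P p ^ Suc n * pois lam (Suc n) t) UNIV"
      using conv_step[OF lam, of "rr P p ^ Suc n" n t] rr_nonneg by (simp add: mult.assoc)
  qed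
  finally show ?case .
qed

lemma AE_pos: "AE w in sq.S. \<forall>k. 0 < fst (w k)"
proof -
  have "AE y in Mk lam p. 0 < fst y"
  proof (rule AE_I')
    have "emeasure (Mk lam p) ({..0} \<times> UNIV) = emeasure E {..0} * emeasure (measure_pmf (bernoulli_pmf p)) UNIV"
      unfolding Mk_def by (rule measure_pmf.emeasure_pair_measure_Times) auto
    also have "\<dots> = 0" by (simp add: emeasure_erlang_density[OF lam] erlang_CDF_at0)
    finally show "{..0::real} \<times> UNIV \<in> null_sets (Mk lam p)" by (intro null_setsI) (auto simp: sets_Mk)
    show "{x \<in> space (Mk lam p). \<not> 0 < fst x} \<subseteq> {..0} \<times> UNIV" by auto
  qed
  then show ?thesis
    by (subst AE_all_countable) (auto intro!: sq.AE_component)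
qed

lemma AE_ne: "AE w in sq.S. \<forall>n. ssum w (Suc n) \<noteq> u"
proof (subst AE_all_countable, intro allI)
  fix n
  show "AE w in sq.S. ssum w (Suc n) \<noteq> u"
    by (rule AE_I'[where N="{w \<in> space sq.S. ssum w (Suc n) = u}"])
       (auto intro!: null_setsI null_ssum)
qed

lemma ssum_mono: "(\<forall>k. 0 < fst (w k)) \<Longrightarrow> n \<le> m \<Longrightarrow> ssum w n \<le> ssum w m"
  unfolding ssum_def by (rule sum_mono2) (auto intro: less_imp_le)

lemma W_disj: "(\<forall>k. 0 < fst (w k)) \<Longrightarrow> w \<in> W P n t \<Longrightarrow> w \<in> W Q m t \<Longrightarrow> n = m"
proof (rule ccontr)
  assume pos: "\<forall>k. 0 < fst (w k)" and a: "w \<in> W P n t" "w \<in> W Q m t" "n \<noteq> m"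
  show False
  proof (cases "n < m")
    case True
    then have "ssum w (Suc n) \<le> ssum w m" using ssum_mono[OF pos] by simp
    then show False using a by (auto simp: W_def)
  next
    case False
    then have "ssum w (Suc m) \<le> ssum w n" using a ssum_mono[OF pos] by simp
    then show False using a by (auto simp: W_def)
  qed
qed

lemma union_measure:
  assumes t: "0 \<le> t"
  shows "emeasure sq.S (\<Union>n. W P n t \<inter> space sq.S) = ennreal (exp (- lam * t * (1 - rr P p)))"
proof -
  let ?Pos = "{w \<in> space sq.S. \<forall>k. 0 < fst (w k)}"
  have Pos[measurable]: "?Pos \<in> sets sq.S" by measurable
  have WP: "W P n t \<inter> ?Pos \<in> sets sq.S" for n
  proof -
    have "W P n t \<inter> ?Pos = (W P n t \<inter> space sq.S) \<inter> ?Pos" by auto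
    then show ?thesis using sets.Int[OF W_sets Pos] by simp
  qed
  have "emeasure sq.S (\<Union>n. W P n t \<inter> space sq.S) = emeasure sq.S (\<Union>n. W P n t \<inter> ?Pos)"
  proof (rule emeasure_eq_AE)
    show "(\<Union>n. W P n t \<inter> space sq.S) \<in> sets sq.S"
      using W_sets by (intro sets.countable_UN) auto
    show "(\<Union>n. W P n t \<inter> ?Pos) \<in> sets sq.S"
      using WP by (intro sets.countable_UN) auto
    show "AE x in sq.S. (x \<in> (\<Union>n. W P n t \<inter> space sq.S)) = (x \<in> (\<Union>n. W P n t \<inter> ?Pos))"
      using AE_pos by eventually_elim auto
  qed
  also have "\<dots> = (\<Sum>n. emeasure sq.S (W P n t \<inter> ?Pos))"
  proof (rule suminf_emeasure[symmetric])
    show "range (\<lambda>n. W P n t \<inter> ?Pos) \<subseteq> sets sq.S"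
      using WP by blast
    show "disjoint_family (\<lambda>n. W P n t \<inter> ?Pos)"
      unfolding disjoint_family_on_def using W_disj by blast
  qed
  also have "\<dots> = (\<Sum>n. emeasure sq.S (W P n t \<inter> space sq.S))"
  proof (intro suminf_cong emeasure_eq_AE[OF _ WP W_sets])
    fix n show "AE x in sq.S. (x \<in> W P n t \<inter> ?Pos) = (x \<in> W P n t \<inter> space sq.S)"
      using AE_pos by eventually_elim auto
  qed
  also have "\<dots> = (\<Sum>n. ennreal (rr P p ^ n * pois lam n t))"
    by (simp add: q_formula)
  also have "\<dots> = ennreal (\<Sum>n. rr P p ^ n * pois lam n t)"
  proof -
    have s: "(\<lambda>n. rr P p ^ n * pois lam n t) sums (exp (- lam * t) * exp (rr P p * lam * t))"
    proof -
      have "(\<lambda>n. exp (- lam * t) * ((rr P p * lam * t) ^ n /\<^sub>R fact n)) sums (exp (- lam * t) * exp (rr P p * lam * t))"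
        by (rule sums_mult) (rule exp_converges)
      moreover have "(\<lambda>n. exp (- lam * t) * ((rr P p * lam * t) ^ n /\<^sub>R fact n)) = (\<lambda>n. rr P p ^ n * pois lam n t)"
        using t by (auto simp: fun_eq_iff pois_def power_mult_distrib divide_inverse_commute)
      ultimately show ?thesis by simp
    qed
    show ?thesis
      using s rr_nonneg lam t
      by (intro suminf_ennreal2) (auto simp: sums_iff intro!: mult_nonneg_nonneg pois_nonneg)
  qed
  also have "(\<Sum>n. rr P p ^ n * pois lam n t) = exp (- lam * t * (1 - rr P p))"
  proof -
    have "(\<lambda>n. rr P p ^ n * pois lam n t) sums (exp (- lam * t) * exp (rr P p * lam * t))"
    proof -
      have "(\<lambda>n. exp (- lam * t) * ((rr P p * lam * t) ^ n /\<^sub>R fact n)) sums (exp (- lam * t) * exp (rr P p * lam * t))"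
        by (rule sums_mult) (rule exp_converges)
      moreover have "(\<lambda>n. exp (- lam * t) * ((rr P p * lam * t) ^ n /\<^sub>R fact n)) = (\<lambda>n. rr P p ^ n * pois lam n t)"
        using t by (auto simp: fun_eq_iff pois_def power_mult_distrib divide_inverse_commute)
      ultimately show ?thesis by simp
    qed
    then show ?thesis by (simp add: sums_iff exp_add[symmetric] algebra_simps)
  qed
  finally show ?thesis .
qed

end


lemma dirvec_sum: "fst (dirvec i) + snd (dirvec i) = (if i mod 4 < 2 then 1 else -1)"
proof -
  have "i mod 4 < 4" by simp
  then have "i mod 4 = 0 \<or> i mod 4 = 1 \<or> i mod 4 = 2 \<or> i mod 4 = 3" by linarith
  moreover have e: "pi * 3 / 2 = pi / 2 + pi" by simp
  have e': "3 * pi / 2 = pi / 2 + pi" by simp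
  have c3a: "cos (pi / 2 + pi) = 0" "sin (pi / 2 + pi) = -1"
    by (simp_all only: cos_periodic_pi sin_periodic_pi cos_pi_half sin_pi_half)
  have c3: "cos (pi * 3 / 2) = 0" "sin (pi * 3 / 2) = -1"
    by (simp_all only: e c3a)
  have c4: "cos (3 * pi / 2) = 0" "sin (3 * pi / 2) = -1"
    by (simp_all only: e' c3a)
  ultimately show ?thesis
    by (auto simp: dirvec_def c3 c4)
qed

lemma dir_index_lt4: "dir_index j b k < 4"
  by (cases k) (auto simp: Let_def)

lemma dir_index_good: "(\<forall>m\<le>N. dir_index j b m < 2) \<longleftrightarrow> (j mod 4 < 2 \<and> (\<forall>k<N. b k))"
proof (induction N)
  case 0
  then show ?case by simp
next
  case (Suc N)
  have "(\<forall>m\<le>Suc N. dir_index j b m < 2) \<longleftrightarrow> (\<forall>m\<le>N. dir_index j b m < 2) \<and> dir_index j b (Suc N) < 2"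
    by (auto simp: le_Suc_eq)
  also have "\<dots> \<longleftrightarrow> (j mod 4 < 2 \<and> (\<forall>k<N. b k)) \<and> dir_index j b (Suc N) < 2"
    using Suc.IH by simp
  also have "\<dots> \<longleftrightarrow> (j mod 4 < 2 \<and> (\<forall>k<Suc N. b k))"
  proof -
    have "dir_index j b N < 2 \<Longrightarrow> dir_index j b (Suc N) < 2 \<longleftrightarrow> b N"
    proof -
      assume "dir_index j b N < 2"
      then have "dir_index j b N = 0 \<or> dir_index j b N = 1" by linarith
      then show ?thesis by (auto simp: Let_def)
    qed
    then show ?thesis using Suc.IH by (auto simp: less_Suc_eq)
  qed
  finally show ?case .
qed

lemma event_time_mono: "(\<forall>k. 0 < \<tau> k) \<Longrightarrow> n \<le> m \<Longrightarrow> event_time \<tau> n \<le> event_time \<tau> m"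
  unfolding event_time_def by (rule sum_mono2) (auto intro: less_imp_le)

lemma event_time_Suc: "event_time \<tau> (Suc n) = event_time \<tau> n + \<tau> n"
  unfolding event_time_def by simp

lemma event_time_nonneg: "(\<forall>k. 0 < \<tau> k) \<Longrightarrow> 0 \<le> event_time \<tau> n"
  unfolding event_time_def by (auto intro: sum_nonneg less_imp_le)

lemma count_eq:
  assumes pos: "\<forall>k. 0 < \<tau> k" and m: "event_time \<tau> m \<le> s" "s < event_time \<tau> (Suc m)"
  shows "count_proc \<tau> s = m"
proof -
  have "{n. 1 \<le> n \<and> event_time \<tau> n \<le> s} = {1..m}"
  proof (intro set_eqI iffI)
    fix n assume "n \<in> {n. 1 \<le> n \<and> event_time \<tau> n \<le> s}"
    then have n: "1 \<le> n" "event_time \<tau> n \<le> s" by auto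
    have "n \<le> m"
    proof (rule ccontr)
      assume "\<not> n \<le> m"
      then have "event_time \<tau> (Suc m) \<le> event_time \<tau> n" using event_time_mono[OF pos] by simp
      then show False using n m by simp
    qed
    then show "n \<in> {1..m}" using n by simp
  next
    fix n assume "n \<in> {1..m}"
    then show "n \<in> {n. 1 \<le> n \<and> event_time \<tau> n \<le> s}"
      using event_time_mono[OF pos, of n m] m by auto
  qed
  then show ?thesis by (simp add: count_proc_def)
qed

lemma exists_m:
  assumes "0 \<le> s" "s < event_time \<tau> (Suc N)"
  shows "\<exists>m\<le>N. event_time \<tau> m \<le> s \<and> s < event_time \<tau> (Suc m)"
  using assms(2)
proof (induction N)
  case 0
  then show ?case using assms(1) by (auto simp: event_time_def)
next
  case (Suc N)
  show ?case
  proof (cases "s < event_time \<tau> (Suc N)")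
    case True
    then show ?thesis using Suc.IH le_Suc_eq by blast
  next
    case False
    then show ?thesis using Suc.prems by (intro exI[of _ "Suc N"]) auto
  qed
qed

lemma integral_lt:
  fixes g :: "real \<Rightarrow> real"
  assumes int: "g integrable_on {0..t}" and le: "\<And>s. g s \<le> 1"
    and ab: "0 \<le> a" "a < b" "b \<le> t" and neg: "\<And>s. s \<in> {a..b} \<Longrightarrow> g s = -1"
  shows "integral {0..t} g < t"
proof -
  have int1: "(\<lambda>s. 1 - g s) integrable_on {0..t}"
    using int by (intro integrable_diff) auto
  have sub: "{a..b} \<subseteq> {0..t}" using ab by auto
  have "integral {a..b} (\<lambda>s. 1 - g s) = integral {a..b} (\<lambda>s. 2::real)"
    by (intro integral_cong) (simp add: neg)
  also have "\<dots> = 2 * (b - a)" using ab by simp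
  finally have ia: "integral {a..b} (\<lambda>s. 1 - g s) = 2 * (b - a)" .
  have "integral {a..b} (\<lambda>s. 1 - g s) \<le> integral {0..t} (\<lambda>s. 1 - g s)"
    by (rule integral_subset_le[OF sub integrable_on_subinterval[OF int1 sub] int1]) (simp add: le)
  moreover have "integral {0..t} (\<lambda>s. 1 - g s) = t - integral {0..t} g"
    using int ab by (subst integral_diff) auto
  ultimately show ?thesis using ia ab by simp
qed

lemma det_main:
  fixes j :: nat and \<tau> :: "nat \<Rightarrow> real" and b :: "nat \<Rightarrow> bool"
  assumes pos: "\<forall>k. 0 < \<tau> k" and t: "0 < t"
    and N: "event_time \<tau> N \<le> t" "t < event_time \<tau> (Suc N)"
    and ne: "\<forall>n. event_time \<tau> (Suc n) \<noteq> t"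
    and int: "(\<lambda>s. dir_proc j \<tau> b s) integrable_on {0..t}"
  shows "fst (integral {0..t} (\<lambda>s. dir_proc j \<tau> b s)) + snd (integral {0..t} (\<lambda>s. dir_proc j \<tau> b s)) = t
    \<longleftrightarrow> (\<forall>m\<le>N. dir_index j b m < 2)"
proof -
  define g where "g s = fst (dir_proc j \<tau> b s) + snd (dir_proc j \<tau> b s)" for s
  have g_eq: "g s = (if dir_index j b (count_proc \<tau> s) < 2 then 1 else -1)" for s
    using dir_index_lt4[of j b "count_proc \<tau> s"]
    by (simp add: g_def dir_proc_def dirvec_sum)
  have gfun: "g = (\<lambda>s. fst (dir_proc j \<tau> b s) + snd (dir_proc j \<tau> b s))"
    by (simp add: fun_eq_iff g_def)
  have bl: "bounded_linear (\<lambda>v::real \<times> real. fst v + snd v)"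
    by (intro bounded_linear_add bounded_linear_fst bounded_linear_snd)
  have lin: "fst (integral {0..t} (\<lambda>s. dir_proc j \<tau> b s)) + snd (integral {0..t} (\<lambda>s. dir_proc j \<tau> b s)) = integral {0..t} g"
    using integral_linear[OF int bl] by (simp add: gfun o_def)
  have gint: "g integrable_on {0..t}"
    using integrable_linear[OF int bl] by (simp add: gfun o_def)
  have cnt: "count_proc \<tau> s = m" if "event_time \<tau> m \<le> s" "s < event_time \<tau> (Suc m)" for s m
    using count_eq[OF pos that] .
  show ?thesis
  proof
    assume good: "\<forall>m\<le>N. dir_index j b m < 2"
    have "g s = 1" if s: "s \<in> {0..t}" for s
    proof -
      obtain m where m: "m \<le> N" "event_time \<tau> m \<le> s" "s < event_time \<tau> (Suc m)"
        using exists_m[of s \<tau> N] s N by auto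
      then show ?thesis using good cnt[OF m(2,3)] by (simp add: g_eq)
    qed
    then have "integral {0..t} g = integral {0..t} (\<lambda>s. 1::real)"
      by (intro integral_cong) auto
    then show "fst (integral {0..t} (\<lambda>s. dir_proc j \<tau> b s)) + snd (integral {0..t} (\<lambda>s. dir_proc j \<tau> b s)) = t"
      using lin t by simp
  next
    assume eq: "fst (integral {0..t} (\<lambda>s. dir_proc j \<tau> b s)) + snd (integral {0..t} (\<lambda>s. dir_proc j \<tau> b s)) = t"
    show "\<forall>m\<le>N. dir_index j b m < 2"
    proof (rule ccontr)
      assume "\<not> (\<forall>m\<le>N. dir_index j b m < 2)"
      then obtain m where m: "m \<le> N" "\<not> dir_index j b m < 2" by auto
      define a where "a = event_time \<tau> m"
      have a0: "0 \<le> a" unfolding a_def by (rule event_time_nonneg[OF pos])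
      have "a \<le> event_time \<tau> N" unfolding a_def using event_time_mono[OF pos m(1)] .
      then have at: "a \<le> t" using N by simp
      have "a \<noteq> t"
      proof (cases m)
        case 0 then show ?thesis using t by (simp add: a_def event_time_def)
      next
        case (Suc n) then show ?thesis using ne by (simp add: a_def)
      qed
      then have at': "a < t" using at by simp
      define c where "c = min (event_time \<tau> (Suc m)) t"
      have ac: "a < c" using at' pos by (simp add: c_def a_def event_time_Suc)
      define d where "d = (a + c) / 2"
      have "integral {0..t} g < t"
      proof (rule integral_lt[OF gint _ a0])
        show "g s \<le> 1" for s by (simp add: g_eq)
        show "a < d" "d \<le> t" using ac by (auto simp: d_def c_def)
        show "g s = -1" if "s \<in> {a..d}" for s
        proof -
          have "event_time \<tau> m \<le> s" "s < event_time \<tau> (Suc m)"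
            using that ac by (auto simp: a_def d_def c_def)
          then show ?thesis using cnt m(2) by (simp add: g_eq)
        qed
      qed
      then show False using eq lin by simp
    qed
  qed
qed



lemma measurable_card_Collect:
  fixes Q :: "nat \<Rightarrow> 'a \<Rightarrow> bool"
  assumes Q: "\<And>n. {x \<in> space M. Q n x} \<in> sets M"
  shows "(\<lambda>x. card {n. Q n x}) \<in> measurable M (count_space UNIV)"
proof -
  have [measurable]: "Measurable.pred M (Q n)" for n
    using Q[of n] by (simp add: pred_def)
  have eq: "(\<lambda>x. card {n. Q n x}) -` {m} \<inter> space M =
    {x \<in> space M. (\<exists>B. (\<forall>n. B \<le> n \<longrightarrow> \<not> Q n x) \<and> (\<exists>F\<in>Pow {..<B}. card F = m \<and> (\<forall>n<B. Q n x \<longleftrightarrow> n \<in> F)))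
       \<or> (m = 0 \<and> (\<forall>B. \<exists>n. B \<le> n \<and> Q n x))}" for m
  proof (intro set_eqI iffI)
    fix x assume x: "x \<in> (\<lambda>x. card {n. Q n x}) -` {m} \<inter> space M"
    show "x \<in> {x \<in> space M. (\<exists>B. (\<forall>n. B \<le> n \<longrightarrow> \<not> Q n x) \<and> (\<exists>F\<in>Pow {..<B}. card F = m \<and> (\<forall>n<B. Q n x \<longleftrightarrow> n \<in> F)))
       \<or> (m = 0 \<and> (\<forall>B. \<exists>n. B \<le> n \<and> Q n x))}"
    proof (cases "finite {n. Q n x}")
      case True
      then obtain B where B: "{n. Q n x} \<subseteq> {..<B}" using finite_nat_bounded by blast
      then have "(\<forall>n. B \<le> n \<longrightarrow> \<not> Q n x) \<and> (\<exists>F\<in>Pow {..<B}. card F = m \<and> (\<forall>n<B. Q n x \<longleftrightarrow> n \<in> F))"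
        using x by (intro conjI bexI[of _ "{n. Q n x}"]) auto
      then show ?thesis using x by blast
    next
      case False
      then have "\<forall>B. \<exists>n. B \<le> n \<and> Q n x"
        using infinite_nat_iff_unbounded_le by auto
      then show ?thesis using x False by auto
    qed
  next
    fix x assume x: "x \<in> {x \<in> space M. (\<exists>B. (\<forall>n. B \<le> n \<longrightarrow> \<not> Q n x) \<and> (\<exists>F\<in>Pow {..<B}. card F = m \<and> (\<forall>n<B. Q n x \<longleftrightarrow> n \<in> F)))
       \<or> (m = 0 \<and> (\<forall>B. \<exists>n. B \<le> n \<and> Q n x))}"
    then have xs: "x \<in> space M" and D: "(\<exists>B. (\<forall>n. B \<le> n \<longrightarrow> \<not> Q n x) \<and> (\<exists>F\<in>Pow {..<B}. card F = m \<and> (\<forall>n<B. Q n x \<longleftrightarrow> n \<in> F)))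
       \<or> (m = 0 \<and> (\<forall>B. \<exists>n. B \<le> n \<and> Q n x))" by auto
    show "x \<in> (\<lambda>x. card {n. Q n x}) -` {m} \<inter> space M"
    proof (cases "m = 0 \<and> (\<forall>B. \<exists>n. B \<le> n \<and> Q n x)")
      case True
      then have "infinite {n. Q n x}" using infinite_nat_iff_unbounded_le by auto
      then show ?thesis using True xs by auto
    next
      case False
      then obtain B F where B: "\<forall>n. B \<le> n \<longrightarrow> \<not> Q n x" and F: "F \<subseteq> {..<B}" "card F = m" "\<forall>n<B. Q n x \<longleftrightarrow> n \<in> F"
        using D by auto
      have "{n. Q n x} = F"
      proof (intro set_eqI iffI)
        fix n assume "n \<in> {n. Q n x}" then show "n \<in> F" using B F by (cases "n < B") auto
      next
        fix n assume "n \<in> F" then show "n \<in> {n. Q n x}" using F by auto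
      qed
      then show ?thesis using F xs by auto
    qed
  qed
  show ?thesis
    unfolding measurable_count_space_eq2_countable
  proof (intro conjI ballI)
    fix m :: nat
    show "(\<lambda>x. card {n. Q n x}) -` {m} \<inter> space M \<in> sets M"
      unfolding eq by measurable
  qed auto
qed

lemma measurable_nat_fun2:
  fixes f :: "'a \<Rightarrow> 'b::countable" and g :: "'a \<Rightarrow> 'c::countable"
  assumes f: "f \<in> measurable M (count_space UNIV)" and g: "g \<in> measurable M (count_space UNIV)"
  shows "(\<lambda>x. h (f x) (g x)) \<in> measurable M (count_space UNIV)"
proof -
  have "(\<lambda>x. h i (g x)) \<in> measurable M (count_space UNIV)" for i
    by (rule measurable_compose[OF g measurable_count_space])
  then show ?thesis by (rule measurable_compose_countable[OF _ f])
qed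

lemma measurable_dir_index:
  assumes J: "J \<in> measurable M (count_space UNIV)"
    and B: "\<And>k. (\<lambda>x. B' x k) \<in> measurable M (count_space UNIV)"
  shows "(\<lambda>x. dir_index (J x) (B' x) n) \<in> measurable M (count_space UNIV)"
proof (induction n)
  case 0
  show ?case by simp (rule measurable_compose[OF J measurable_count_space])
next
  case (Suc n)
  let ?h = "\<lambda>j c. if even j then (if c then (j + 1) mod 4 else (j + 3) mod 4)
      else (if c then (j + 3) mod 4 else (j + 1) mod 4)"
  have "(\<lambda>x. ?h (dir_index (J x) (B' x) n) (B' x n)) \<in> measurable M (count_space UNIV)"
    by (rule measurable_nat_fun2[OF Suc B])
  then show ?case by (simp add: Let_def)
qed

lemma norm_dirvec: "norm (dirvec i) = 1"
  by (simp add: dirvec_def norm_Pair)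

lemma meas_count:
  "(\<lambda>y. count_proc (\<lambda>k. fst (snd (fst y) k)) (snd y)) \<in> measurable (input_space \<Otimes>\<^sub>M lborel) (count_space UNIV)"
  unfolding count_proc_def
proof (rule measurable_card_Collect)
  fix n
  let ?X = "input_space \<Otimes>\<^sub>M lborel"
  have c: "(\<lambda>y. fst (snd (fst y) k)) \<in> borel_measurable ?X" for k
  proof -
    have "(\<lambda>y. snd (fst y)) \<in> measurable ?X (\<Pi>\<^sub>M k\<in>UNIV. borel \<Otimes>\<^sub>M count_space UNIV)"
      unfolding input_space_def by (rule measurable_compose[OF measurable_fst measurable_snd])
    then have "(\<lambda>y. snd (fst y) k) \<in> measurable ?X (borel \<Otimes>\<^sub>M count_space UNIV)"
      by (rule measurable_compose[OF _ measurable_component_singleton]) simp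
    then show ?thesis by (rule measurable_compose[OF _ measurable_fst])
  qed
  have s: "(\<lambda>y. event_time (\<lambda>k. fst (snd (fst y) k)) n) \<in> borel_measurable ?X"
    unfolding event_time_def by (rule borel_measurable_sum) (rule c)
  have sn: "(\<lambda>y. snd y) \<in> borel_measurable ?X"
    using measurable_snd[of input_space lborel] by simp
  have "{y \<in> space ?X. event_time (\<lambda>k. fst (snd (fst y) k)) n \<le> snd y} \<in> sets ?X"
    by (rule borel_measurable_le[OF s sn])
  then show "{y \<in> space ?X. 1 \<le> n \<and> event_time (\<lambda>k. fst (snd (fst y) k)) n \<le> snd y} \<in> sets ?X"
    by (cases "1 \<le> n") auto
qed

lemma meas_dp:
  "(\<lambda>y. dir_proc (fst (fst y)) (\<lambda>k. fst (snd (fst y) k)) (\<lambda>k. snd (snd (fst y) k)) (snd y))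
     \<in> borel_measurable (input_space \<Otimes>\<^sub>M lborel)"
proof -
  let ?X = "input_space \<Otimes>\<^sub>M lborel"
  have J: "(\<lambda>y. fst (fst y)) \<in> measurable (input_space \<Otimes>\<^sub>M lborel) (count_space UNIV)"
    unfolding input_space_def by (rule measurable_compose[OF measurable_fst measurable_fst])
  have B: "(\<lambda>y. snd (snd (fst y) k)) \<in> measurable (input_space \<Otimes>\<^sub>M lborel) (count_space UNIV)" for k
  proof -
    have "(\<lambda>y. snd (fst y)) \<in> measurable ?X (\<Pi>\<^sub>M k\<in>UNIV. borel \<Otimes>\<^sub>M count_space UNIV)"
      unfolding input_space_def by (rule measurable_compose[OF measurable_fst measurable_snd])
    then have "(\<lambda>y. snd (fst y) k) \<in> measurable ?X (borel \<Otimes>\<^sub>M count_space UNIV)"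
      by (rule measurable_compose[OF _ measurable_component_singleton]) simp
    then show ?thesis by (rule measurable_compose[OF _ measurable_snd])
  qed
  have "(\<lambda>y. dir_index (fst (fst y)) (\<lambda>k. snd (snd (fst y) k)) (count_proc (\<lambda>k. fst (snd (fst y) k)) (snd y)))
      \<in> measurable (input_space \<Otimes>\<^sub>M lborel) (count_space UNIV)"
    by (rule measurable_compose_countable[OF _ meas_count]) (rule measurable_dir_index[OF J B])
  moreover have "dirvec \<in> borel_measurable (count_space UNIV)" by simp
  ultimately show ?thesis unfolding dir_proc_def by (rule measurable_compose)
qed

lemma space_input: "space input_space = UNIV"
  by (auto simp: input_space_def space_pair_measure space_PiM)

lemma meas_F:
  "(\<lambda>x. integral {0..t} (\<lambda>s. dir_proc (fst x) (\<lambda>k. fst (snd x k)) (\<lambda>k. snd (snd x k)) s)) \<in> borel_measurable input_space"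
proof -
  let ?dp = "\<lambda>x s. dir_proc (fst x) (\<lambda>k. fst (snd x k)) (\<lambda>k. snd (snd x k)) s"
  have mdp: "(\<lambda>s. ?dp x s) \<in> borel_measurable lborel" if "x \<in> space input_space" for x
    using measurable_Pair2[OF meas_dp that] by simp
  have si: "set_integrable lborel {0..t} (?dp x)" if "x \<in> space input_space" for x
    unfolding set_integrable_def
    by (rule integrableI_bounded_set_indicator[where B=1]) (use mdp[OF that] in \<open>auto simp: dir_proc_def norm_dirvec emeasure_lborel_Icc_eq\<close>)
  have eq: "integral {0..t} (?dp x) = (\<integral>s. indicator {0..t} s *\<^sub>R ?dp x s \<partial>lborel)" if "x \<in> space input_space" for x
    using set_borel_integral_eq_integral(2)[OF si[OF that]] by (simp add: set_lebesgue_integral_def)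
  have "(\<lambda>x. \<integral>s. indicator {0..t} s *\<^sub>R ?dp x s \<partial>lborel) \<in> borel_measurable input_space"
  proof (rule lborel.borel_measurable_lebesgue_integral)
    show "(\<lambda>(x, s). indicator {0..t} s *\<^sub>R ?dp x s) \<in> borel_measurable (input_space \<Otimes>\<^sub>M lborel)"
    proof -
      have m1: "(\<lambda>y. indicator {0..t} (snd y) :: real) \<in> borel_measurable (input_space \<Otimes>\<^sub>M lborel)"
        by (rule measurable_compose[OF measurable_snd borel_measurable_indicator]) (simp only: sets_lborel atLeastAtMost_borel)
      show ?thesis unfolding split_beta' by (rule borel_measurable_scaleR[OF m1 meas_dp])
    qed
  qed
  moreover have "(\<lambda>x. integral {0..t} (?dp x)) = (\<lambda>x. \<integral>s. indicator {0..t} s *\<^sub>R ?dp x s \<partial>lborel)"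
  proof
    fix x show "integral {0..t} (?dp x) = (\<integral>s. indicator {0..t} s *\<^sub>R ?dp x s \<partial>lborel)"
      by (rule eq) (simp add: space_input)
  qed
  ultimately show ?thesis by (simp only:)
qed



lemma integrable_dp: "(\<lambda>s. dir_proc j \<tau> b s) integrable_on {0..t}"
proof -
  let ?x = "(j, \<lambda>k. (\<tau> k, b k))"
  have "?x \<in> space input_space" by (simp add: space_input)
  from measurable_Pair2[OF meas_dp this]
  have mdp: "(\<lambda>s. dir_proc j \<tau> b s) \<in> borel_measurable lborel" by simp
  have "set_integrable lborel {0..t} (\<lambda>s. dir_proc j \<tau> b s)"
    unfolding set_integrable_def
    by (rule integrableI_bounded_set_indicator[where B=1]) (use mdp in \<open>auto simp: dir_proc_def norm_dirvec emeasure_lborel_Icc_eq\<close>)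
  then show ?thesis by (rule set_borel_integral_eq_integral(1))
qed

lemma rr_id: "rr (\<lambda>b. b) p = p" by (simp add: rr_def)
lemma rr_True: "rr (\<lambda>_. True) p = 1" by (simp add: rr_def)

lemma event_time_ssum: "event_time (\<lambda>k. fst (w k)) n = ssum w n"
  by (simp add: event_time_def ssum_def)

lemma det_set:
  fixes c t :: real and x :: nat and y :: "nat \<Rightarrow> real \<times> bool"
  assumes c: "c > 0" and t: "t > 0"
    and pos: "\<forall>k. 0 < fst (y k)" and ne: "\<forall>n. ssum y (Suc n) \<noteq> t"
    and N: "y \<in> W (\<lambda>_. True) N t"
  shows "(fst (c *\<^sub>R integral {0..t} (\<lambda>s. dir_proc x (\<lambda>k. fst (y k)) (\<lambda>k. snd (y k)) s))
        + snd (c *\<^sub>R integral {0..t} (\<lambda>s. dir_proc x (\<lambda>k. fst (y k)) (\<lambda>k. snd (y k)) s)) = c * t)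
    \<longleftrightarrow> (x mod 4 < 2 \<and> (\<exists>n. y \<in> W (\<lambda>b. b) n t))"
proof -
  let ?I = "integral {0..t} (\<lambda>s. dir_proc x (\<lambda>k. fst (y k)) (\<lambda>k. snd (y k)) s)"
  have "(fst (c *\<^sub>R ?I) + snd (c *\<^sub>R ?I) = c * t) \<longleftrightarrow> (fst ?I + snd ?I = t)"
    using c by (simp add: distrib_left[symmetric])
  also have "\<dots> \<longleftrightarrow> (\<forall>m\<le>N. dir_index x (\<lambda>k. snd (y k)) m < 2)"
    by (rule det_main) (use pos t ne N in \<open>auto simp: event_time_ssum W_def integrable_dp\<close>)
  also have "\<dots> \<longleftrightarrow> (x mod 4 < 2 \<and> (\<forall>k<N. snd (y k)))"
    by (rule dir_index_good)
  also have "\<dots> \<longleftrightarrow> (x mod 4 < 2 \<and> (\<exists>n. y \<in> W (\<lambda>b. b) n t))"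
  proof -
    have "(\<forall>k<N. snd (y k)) \<longleftrightarrow> y \<in> W (\<lambda>b. b) N t" using N by (simp add: W_def)
    moreover have "y \<in> W (\<lambda>b. b) n t \<Longrightarrow> n = N" for n
    proof -
      assume "y \<in> W (\<lambda>b. b) n t"
      moreover have "motion_ctx 1 0" by (simp add: motion_ctx_def)
      ultimately show "n = N" using motion_ctx.W_disj[of 1 0] pos N by blast
    qed
    ultimately show ?thesis by blast
  qed
  finally show ?thesis .
qed



theorem mainTheorem4:
  fixes M :: "'a measure"
    and J0 :: "'a \<Rightarrow> nat" and T :: "nat \<Rightarrow> 'a \<Rightarrow> real" and B :: "nat \<Rightarrow> 'a \<Rightarrow> bool"
    and lam c p t :: real
  assumes "prob_space M"
    and "lam > 0" and "c > 0" and "0 < p" and "p < 1"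
    and "(\<lambda>\<omega>. (J0 \<omega>, \<lambda>k. (T k \<omega>, B k \<omega>))) \<in> M \<rightarrow>\<^sub>M input_space"
    and "distr M input_space (\<lambda>\<omega>. (J0 \<omega>, \<lambda>k. (T k \<omega>, B k \<omega>))) = input_law lam p"
    and "t > 0"
  shows "measure M {\<omega> \<in> space M.
            fst (position c (J0 \<omega>) (\<lambda>k. T k \<omega>) (\<lambda>k. B k \<omega>) t)
          + snd (position c (J0 \<omega>) (\<lambda>k. T k \<omega>) (\<lambda>k. B k \<omega>) t) = c * t}
         = 1 / 2 * exp (- lam * t * (1 - p))"
proof -
  interpret motion_ctx lam p using assms(2,4,5) by (simp add: motion_ctx_def)
  let ?psi = "\<lambda>\<omega>. (J0 \<omega>, \<lambda>k. (T k \<omega>, B k \<omega>))"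
  let ?L = "input_law lam p"
  let ?F = "\<lambda>x. integral {0..t} (\<lambda>s. dir_proc (fst x) (\<lambda>k. fst (snd x k)) (\<lambda>k. snd (snd x k)) s)"
  define A where "A = {x \<in> space input_space. fst (c *\<^sub>R ?F x) + snd (c *\<^sub>R ?F x) = c * t}"
  have A_sets: "A \<in> sets input_space"
  proof -
    have cf: "fst \<in> borel_measurable (borel :: (real \<times> real) measure)" "snd \<in> borel_measurable (borel :: (real \<times> real) measure)"
      by (intro borel_measurable_continuous_onI continuous_on_fst continuous_on_snd continuous_on_id)+
    have m1: "(\<lambda>x. fst (?F x)) \<in> borel_measurable input_space"
      by (rule measurable_compose[OF meas_F cf(1)])
    have m2: "(\<lambda>x. snd (?F x)) \<in> borel_measurable input_space"
      by (rule measurable_compose[OF meas_F cf(2)])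
    have "(\<lambda>x. c * fst (?F x) + c * snd (?F x)) \<in> borel_measurable input_space"
      by (intro borel_measurable_add borel_measurable_times borel_measurable_const m1 m2)
    then have "{x \<in> space input_space. c * fst (?F x) + c * snd (?F x) = c * t} \<in> sets input_space"
      by (rule borel_measurable_eq) simp
    then show ?thesis unfolding A_def by simp
  qed
  have setL: "sets ?L = sets input_space"
    using assms(7) by (metis sets_distr)
  have "{\<omega> \<in> space M. fst (position c (J0 \<omega>) (\<lambda>k. T k \<omega>) (\<lambda>k. B k \<omega>) t)
          + snd (position c (J0 \<omega>) (\<lambda>k. T k \<omega>) (\<lambda>k. B k \<omega>) t) = c * t} = ?psi -` A \<inter> space M"
    by (auto simp: A_def position_def space_input)
  then have step1: "measure M {\<omega> \<in> space M. fst (position c (J0 \<omega>) (\<lambda>k. T k \<omega>) (\<lambda>k. B k \<omega>) t)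
          + snd (position c (J0 \<omega>) (\<lambda>k. T k \<omega>) (\<lambda>k. B k \<omega>) t) = c * t} = measure ?L A"
    using measure_distr[OF assms(6) A_sets] assms(7) by simp
  define U where "U = (\<Union>n. W (\<lambda>b. b) n t \<inter> space sq.S)"
  define A' where "A' = {x::nat. x mod 4 < 2} \<times> U"
  have U_sets: "U \<in> sets sq.S"
    unfolding U_def using W_sets by (intro sets.countable_UN) auto
  have L_eq: "?L = measure_pmf (pmf_of_set {0..<4::nat}) \<Otimes>\<^sub>M sq.S"
    by (rule input_law_eq)
  have A'_sets: "A' \<in> sets ?L"
    unfolding L_eq A'_def by (rule pair_measureI) (auto simp: U_sets)
  have A_setsL: "A \<in> sets ?L" using setL A_sets by simp
  have AE3: "AE w in sq.S. w \<in> (\<Union>n. W (\<lambda>_. True) n t \<inter> space sq.S)"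
  proof -
    have s: "(\<Union>n. W (\<lambda>_. True) n t \<inter> space sq.S) \<in> sets sq.S"
      using W_sets by (intro sets.countable_UN) auto
    have "emeasure sq.S (\<Union>n. W (\<lambda>_. True) n t \<inter> space sq.S) = 1"
      using union_measure[of t "\<lambda>_. True"] assms(8) by (simp add: rr_True)
    then have "measure sq.S (\<Union>n. W (\<lambda>_. True) n t \<inter> space sq.S) = 1"
      by (simp add: measure_def)
    then show ?thesis using sq.P.AE_in_set_eq_1[OF s] by simp
  qed
  have AEG: "AE w in sq.S. w \<in> space sq.S \<and> (\<forall>k. 0 < fst (w k)) \<and> (\<forall>n. ssum w (Suc n) \<noteq> t) \<and> (\<exists>N. w \<in> W (\<lambda>_. True) N t)"
    using AE_pos AE_ne[of t] AE3 AE_space by eventually_elim auto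
  interpret PS: pair_sigma_finite "measure_pmf (pmf_of_set {0..<4::nat})" sq.S
    by (intro pair_sigma_finite.intro prob_space_imp_sigma_finite prob_space_measure_pmf sq.P.prob_space_axioms)
  have AEL: "AE x in ?L. (x \<in> A) = (x \<in> A')"
    unfolding L_eq
  proof (rule PS.AE_pair_measure)
    have "{x \<in> space (measure_pmf (pmf_of_set {0..<4::nat}) \<Otimes>\<^sub>M sq.S). (x \<in> A) = (x \<in> A')}
        = (space (measure_pmf (pmf_of_set {0..<4::nat}) \<Otimes>\<^sub>M sq.S) - (A \<union> A')) \<union> (A \<inter> A')"
      using sets.sets_into_space[OF A_setsL] sets.sets_into_space[OF A'_sets] unfolding L_eq by auto
    also have "\<dots> \<in> sets (measure_pmf (pmf_of_set {0..<4::nat}) \<Otimes>\<^sub>M sq.S)"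
      using A_setsL A'_sets unfolding L_eq by auto
    finally show "{x \<in> space (measure_pmf (pmf_of_set {0..<4::nat}) \<Otimes>\<^sub>M sq.S). (x \<in> A) = (x \<in> A')}
        \<in> sets (measure_pmf (pmf_of_set {0..<4::nat}) \<Otimes>\<^sub>M sq.S)" .
    show "AE x in measure_pmf (pmf_of_set {0..<4::nat}). AE y in sq.S. ((x, y) \<in> A) = ((x, y) \<in> A')"
    proof (rule AE_I2)
      fix x :: nat
      show "AE y in sq.S. ((x, y) \<in> A) = ((x, y) \<in> A')"
        using AEG
      proof eventually_elim
        case (elim y)
        then obtain N where ys: "y \<in> space sq.S" and pos: "\<forall>k. 0 < fst (y k)"
          and ne: "\<forall>n. ssum y (Suc n) \<noteq> t" and N: "y \<in> W (\<lambda>_. True) N t" by blast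
        have "((x, y) \<in> A) \<longleftrightarrow> (x mod 4 < 2 \<and> (\<exists>n. y \<in> W (\<lambda>b. b) n t))"
          unfolding A_def using det_set[OF assms(3) assms(8) pos ne N, of x] by (simp add: space_input)
        also have "\<dots> \<longleftrightarrow> (x, y) \<in> A'"
          using ys by (auto simp: A'_def U_def)
        finally show ?case .
      qed
    qed
  qed
  have "measure ?L A = measure ?L A'"
    by (rule measure_eq_AE[OF AEL A_setsL A'_sets])
  also have "\<dots> = 1 / 2 * exp (- lam * t * (1 - p))"
  proof -
    have "emeasure ?L A' = emeasure (measure_pmf (pmf_of_set {0..<4::nat})) {x::nat. x mod 4 < 2} * emeasure sq.S U"
      unfolding L_eq A'_def by (rule sq.P.emeasure_pair_measure_Times) (auto simp: U_sets)
    also have "emeasure (measure_pmf (pmf_of_set {0..<4::nat})) {x::nat. x mod 4 < 2} = ennreal (1 / 2)"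
    proof -
      have e: "{0..<4::nat} \<inter> {x. x mod 4 < 2} = {0, 1}" by auto
      have m: "measure (measure_pmf (pmf_of_set {0..<4::nat})) {x::nat. x mod 4 < 2} = 1 / 2"
        by (subst measure_pmf_of_set) (auto simp: e)
      show ?thesis by (subst measure_pmf.emeasure_eq_measure) (subst m, rule refl)
    qed
    also have "emeasure sq.S U = ennreal (exp (- lam * t * (1 - p)))"
      unfolding U_def using union_measure[of t "\<lambda>b. b"] assms(8) by (simp add: rr_id)
    finally have h: "emeasure ?L A' = ennreal (1 / 2) * ennreal (exp (- lam * t * (1 - p)))" .
    have "emeasure ?L A' = ennreal (1 / 2 * exp (- lam * t * (1 - p)))"
      by (subst ennreal_mult) (auto simp: h)
    then show ?thesis by (simp add: measure_def)
  qed
  finally show ?thesis using step1 by simp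
qed

end
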